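(* Let $\mathcal{S}$ be a set of Turing degrees and let $\mathbb{R}_{\mathcal{S}}$ be the set of reals whose Turing degree lies in $\mathcal{S}$. Then $\mathbb{R}_{\mathcal{S}}$ is a subfield of $\mathbb{R}$ if and only if $\mathcal{S}$ is a nonempty ideal, i.e. $\mathcal{S}$ is nonempty, closed under finite joins $\oplus$, and closed downward under $\le_T$.
   Context: Turing reducibility between reals is the usual one; $\oplus$ denotes the Turing join. *)

theory Defs
  imports Complex_Main "HOL-Library.Nat_Bijection"
begin

text \<open>Codes for unary partial recursive functions with an extra input function, in the style of
  Kleene's mu-recursive functions, using Cantor pairing on nat.\<close>

datatype rcode =
    CZero | CSucc | CLeft | CRight | COracle
  | CPair rcode rcode | CComp rcode rcode | CPrec rcode rcode | CRfind rcode

inductive eval :: "(nat \<Rightarrow> nat) \<Rightarrow> rcode \<Rightarrow> nat \<Rightarrow> nat \<Rightarrow> bool" for or where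
  zero: "eval or CZero n 0"
| succ: "eval or CSucc n (Suc n)"
| left: "eval or CLeft n (fst (prod_decode n))"
| right: "eval or CRight n (snd (prod_decode n))"
| query: "eval or COracle n (or n)"
| pair: "eval or c n a \<Longrightarrow> eval or d n b \<Longrightarrow> eval or (CPair c d) n (prod_encode (a, b))"
| comp: "eval or d n a \<Longrightarrow> eval or c a b \<Longrightarrow> eval or (CComp c d) n b"
| prec0: "eval or f a r \<Longrightarrow> eval or (CPrec f h) (prod_encode (a, 0)) r"
| precS: "eval or (CPrec f h) (prod_encode (a, k)) r \<Longrightarrow>
          eval or h (prod_encode (a, prod_encode (k, r))) s \<Longrightarrow>
          eval or (CPrec f h) (prod_encode (a, Suc k)) s"
| rfind: "eval or f (prod_encode (a, k)) 0 \<Longrightarrow>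
          (\<forall>i<k. \<exists>v. v \<noteq> 0 \<and> eval or f (prod_encode (a, i)) v) \<Longrightarrow>
          eval or (CRfind f) a k"

definition chi :: "nat set \<Rightarrow> nat \<Rightarrow> nat" where
  "chi A n = (if n \<in> A then 1 else 0)"

definition turing_le :: "nat set \<Rightarrow> nat set \<Rightarrow> bool" (infix "\<le>\<^sub>T" 50) where
  "A \<le>\<^sub>T B \<longleftrightarrow> (\<exists>c. \<forall>n. eval (chi B) c n (chi A n))"

definition turing_eq :: "nat set \<Rightarrow> nat set \<Rightarrow> bool" where
  "turing_eq A B \<longleftrightarrow> A \<le>\<^sub>T B \<and> B \<le>\<^sub>T A"

definition tjoin :: "nat set \<Rightarrow> nat set \<Rightarrow> nat set" (infixl "\<oplus>\<^sub>T" 65) where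
  "A \<oplus>\<^sub>T B = {2 * n | n. n \<in> A} \<union> {2 * n + 1 | n. n \<in> B}"

definition tdeg :: "nat set \<Rightarrow> nat set set" where
  "tdeg A = {B. turing_eq A B}"

definition turing_degrees :: "nat set set set" where
  "turing_degrees = range tdeg"

definition degree_ideal :: "nat set set set \<Rightarrow> bool" where
  "degree_ideal S \<longleftrightarrow>
     S \<noteq> {} \<and>
     (\<forall>A B. tdeg A \<in> S \<longrightarrow> tdeg B \<in> S \<longrightarrow> tdeg (A \<oplus>\<^sub>T B) \<in> S) \<and>
     (\<forall>A B. tdeg A \<in> S \<longrightarrow> B \<le>\<^sub>T A \<longrightarrow> tdeg B \<in> S)"

definition rat_of_code :: "nat \<Rightarrow> rat" where
  "rat_of_code n = (case prod_decode n of (a, b) \<Rightarrow> of_int (int_decode a) / of_nat (Suc b))"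

definition real_cut :: "real \<Rightarrow> nat set" where
  "real_cut x = {n. real_of_rat (rat_of_code n) < x}"

definition real_deg :: "real \<Rightarrow> nat set set" where
  "real_deg x = tdeg (real_cut x)"

definition reals_of_degrees :: "nat set set set \<Rightarrow> real set" where
  "reals_of_degrees S = {x. real_deg x \<in> S}"

definition is_subfield :: "real set \<Rightarrow> bool" where
  "is_subfield K \<longleftrightarrow> 0 \<in> K \<and> 1 \<in> K \<and>
     (\<forall>x\<in>K. \<forall>y\<in>K. x + y \<in> K \<and> x * y \<in> K) \<and>
     (\<forall>x\<in>K. - x \<in> K) \<and> (\<forall>x\<in>K. x \<noteq> 0 \<longrightarrow> inverse x \<in> K)"

end

theory Submission
  imports Defs
begin


definition rc :: "(nat \<Rightarrow> nat) \<Rightarrow> (nat \<Rightarrow> nat) \<Rightarrow> bool" where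
  "rc f g \<longleftrightarrow> (\<exists>c. \<forall>n. eval f c n (g n))"

abbreviation pd1 :: "nat \<Rightarrow> nat" where "pd1 n \<equiv> fst (prod_decode n)"
abbreviation pd2 :: "nat \<Rightarrow> nat" where "pd2 n \<equiv> snd (prod_decode n)"
abbreviation pe :: "nat \<Rightarrow> nat \<Rightarrow> nat" where "pe a b \<equiv> prod_encode (a, b)"

lemma comp_cong: "rc f g \<Longrightarrow> (\<And>n. g n = h n) \<Longrightarrow> rc f h"
  unfolding rc_def by metis

lemma comp_zero: "rc f (\<lambda>n. 0)"
  unfolding rc_def by (metis eval.zero)
lemma comp_fst: "rc f (\<lambda>n. pd1 n)"
  unfolding rc_def by (metis eval.left)
lemma comp_snd: "rc f (\<lambda>n. pd2 n)"
  unfolding rc_def by (metis eval.right)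
lemma comp_oracle: "rc f f"
  unfolding rc_def by (metis eval.query)
lemma comp_compose: "rc f g \<Longrightarrow> rc f h \<Longrightarrow> rc f (\<lambda>n. g (h n))"
  unfolding rc_def by (metis eval.comp)
lemma comp_pair: "rc f g \<Longrightarrow> rc f h \<Longrightarrow> rc f (\<lambda>n. pe (g n) (h n))"
  unfolding rc_def by (metis eval.pair)
lemma comp_Suc0: "rc f Suc" unfolding rc_def by (metis eval.succ)
lemma comp_Suc: "rc f g \<Longrightarrow> rc f (\<lambda>n. Suc (g n))"
proof -
  assume "rc f g"
  moreover have "rc f Suc" unfolding rc_def by (metis eval.succ)
  ultimately show ?thesis using comp_compose[of f Suc g] by simp
qed
lemma comp_const: "rc f (\<lambda>n. k)"
  by (induction k) (auto intro: comp_zero comp_Suc)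

lemma comp_prec_raw:
  assumes "rc f g" "rc f h"
  shows "rc f (\<lambda>n. rec_nat (g (pd1 n)) (\<lambda>k r. h (pe (pd1 n) (pe k r))) (pd2 n))"
proof -
  obtain cg where cg: "\<forall>n. eval f cg n (g n)" using assms(1) unfolding rc_def by auto
  obtain ch where ch: "\<forall>n. eval f ch n (h n)" using assms(2) unfolding rc_def by auto
  have "eval f (CPrec cg ch) (pe a k) (rec_nat (g a) (\<lambda>k r. h (pe a (pe k r))) k)" for a k
  proof (induction k)
    case 0 then show ?case using cg by (simp add: eval.prec0)
  next
    case (Suc k) then show ?case using ch by (simp add: eval.precS)
  qed
  then have "eval f (CPrec cg ch) n (rec_nat (g (pd1 n)) (\<lambda>k r. h (pe (pd1 n) (pe k r))) (pd2 n))" for n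
    by (metis prod.collapse prod_decode_inverse)
  then show ?thesis unfolding rc_def by blast
qed

lemma comp_id: "rc f (\<lambda>n. n)"
proof -
  have a: "rc f (\<lambda>m. pd1 (pd2 m))" using comp_compose[OF comp_fst comp_snd] .
  have "rc f (\<lambda>n. rec_nat (0::nat) (\<lambda>k r. pd1 (pd2 (pe 0 (pe k r)))) (pd2 n))"
    using comp_prec_raw[OF comp_zero a] by simp
  then have "rc f (\<lambda>n. rec_nat (0::nat) (\<lambda>k r. pd1 (pd2 (pe 0 (pe k r)))) (pd2 (pe 0 (Suc n))))"
    by (rule comp_compose[where h="\<lambda>n. pe 0 (Suc n)"]) (intro comp_pair comp_zero comp_Suc0)
  then show ?thesis by simp
qed

lemma comp_bin: "rc f (\<lambda>p. F (pd1 p) (pd2 p)) \<Longrightarrow> rc f g \<Longrightarrow> rc f h \<Longrightarrow> rc f (\<lambda>n. F (g n) (h n))"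
  using comp_compose[of f "\<lambda>p. F (pd1 p) (pd2 p)" "\<lambda>n. pe (g n) (h n)"] comp_pair[of f g h] by simp

lemma comp_rec1: "rc f h \<Longrightarrow> rc f (\<lambda>n. rec_nat c (\<lambda>k r. h (pe k r)) n)"
proof -
  assume h: "rc f h"
  have "rc f (\<lambda>m. h (pd2 m))" using comp_compose[OF h comp_snd] .
  from comp_prec_raw[OF comp_const[of f c] this]
  have "rc f (\<lambda>n. rec_nat c (\<lambda>k r. h (pe k r)) (pd2 n))" by simp
  from comp_compose[OF this comp_pair[OF comp_zero comp_id]] show ?thesis by simp
qed

lemma comp_plus0: "rc f (\<lambda>p. pd1 p + pd2 p)"
proof -
  have "rc f (\<lambda>m. Suc (pd2 (pd2 m)))" by (intro comp_Suc comp_compose[OF comp_snd comp_snd])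
  from comp_prec_raw[OF comp_id this]
  have "rc f (\<lambda>n. rec_nat (pd1 n) (\<lambda>k r. Suc r) (pd2 n))" by simp
  moreover have "rec_nat a (\<lambda>k r. Suc r) k = a + k" for a k :: nat by (induction k) auto
  ultimately show ?thesis by simp
qed

lemma comp_plus: "rc f g \<Longrightarrow> rc f h \<Longrightarrow> rc f (\<lambda>n. g n + h n)"
  by (rule comp_bin[OF comp_plus0])

lemma comp_times0: "rc f (\<lambda>p. pd1 p * pd2 p)"
proof -
  have "rc f (\<lambda>m. pd2 (pd2 m) + pd1 m)" by (intro comp_plus comp_compose[OF comp_snd comp_snd] comp_fst)
  from comp_prec_raw[OF comp_zero this]
  have "rc f (\<lambda>n. rec_nat 0 (\<lambda>k r. r + pd1 n) (pd2 n))" by simp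
  moreover have "rec_nat 0 (\<lambda>k r. r + a) k = a * k" for a k :: nat by (induction k) auto
  ultimately show ?thesis by simp
qed

lemma comp_times: "rc f g \<Longrightarrow> rc f h \<Longrightarrow> rc f (\<lambda>n. g n * h n)"
  by (rule comp_bin[OF comp_times0])

lemma comp_pred: "rc f (\<lambda>n. n - 1)"
proof -
  from comp_rec1[OF comp_fst, of f 0]
  have "rc f (\<lambda>n. rec_nat 0 (\<lambda>k r. k) n)" by simp
  moreover have "rec_nat 0 (\<lambda>k r. k) n = n - 1" for n :: nat by (cases n) auto
  ultimately show ?thesis by simp
qed

lemma comp_minus0: "rc f (\<lambda>p. pd1 p - pd2 p)"
proof -
  have "rc f (\<lambda>m. pd2 (pd2 m) - 1)" by (intro comp_compose[OF comp_pred] comp_compose[OF comp_snd comp_snd])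
  from comp_prec_raw[OF comp_id this]
  have "rc f (\<lambda>n. rec_nat (pd1 n) (\<lambda>k r. r - 1) (pd2 n))" by simp
  moreover have "rec_nat a (\<lambda>k r. r - 1) k = a - k" for a k :: nat by (induction k) auto
  ultimately show ?thesis by simp
qed

lemma comp_minus: "rc f g \<Longrightarrow> rc f h \<Longrightarrow> rc f (\<lambda>n. g n - h n)"
  by (rule comp_bin[OF comp_minus0])

lemma comp_pow4: "rc f g \<Longrightarrow> rc f (\<lambda>n. 4 ^ g n)"
proof -
  assume g: "rc f g"
  have "rc f (\<lambda>m. 4 * pd2 m)" by (intro comp_times comp_const comp_snd)
  from comp_rec1[OF this, of 1]
  have "rc f (\<lambda>n. rec_nat 1 (\<lambda>k r. 4 * r) n)" by simp
  moreover have "rec_nat 1 (\<lambda>k r. 4 * r) n = (4::nat) ^ n" for n by (induction n) auto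
  ultimately have "rc f (\<lambda>n. 4 ^ n)" by simp
  from comp_compose[OF this g] show ?thesis .
qed

definition dec :: "(nat \<Rightarrow> nat) \<Rightarrow> (nat \<Rightarrow> bool) \<Rightarrow> bool" where
  "dec f P \<longleftrightarrow> rc f (\<lambda>n. if P n then 1 else 0)"

lemma dec_cong: "dec f P \<Longrightarrow> (\<And>n. P n = Q n) \<Longrightarrow> dec f Q"
  unfolding dec_def by simp

lemma dec_less: "rc f g \<Longrightarrow> rc f h \<Longrightarrow> dec f (\<lambda>n. g n < h n)"
  unfolding dec_def
  by (rule comp_cong[where g="\<lambda>n. 1 - (1 - (h n - g n))"]) (auto intro!: comp_minus comp_const)

lemma dec_not: "dec f P \<Longrightarrow> dec f (\<lambda>n. \<not> P n)"
  unfolding dec_def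
  by (rule comp_cong[where g="\<lambda>n. 1 - (if P n then 1 else 0)"]) (auto intro!: comp_minus comp_const)

lemma dec_conj: "dec f P \<Longrightarrow> dec f Q \<Longrightarrow> dec f (\<lambda>n. P n \<and> Q n)"
  unfolding dec_def
  by (rule comp_cong[where g="\<lambda>n. (if P n then 1 else 0) * (if Q n then 1 else 0)"]) (auto intro!: comp_times)

lemma dec_disj: "dec f P \<Longrightarrow> dec f Q \<Longrightarrow> dec f (\<lambda>n. P n \<or> Q n)"
  using dec_not[OF dec_conj[OF dec_not dec_not], of f P Q] by simp

lemma dec_le: "rc f g \<Longrightarrow> rc f h \<Longrightarrow> dec f (\<lambda>n. g n \<le> h n)"
  using dec_not[OF dec_less[of f h g]] by (simp add: not_less)

lemma dec_eq: "rc f g \<Longrightarrow> rc f h \<Longrightarrow> dec f (\<lambda>n. g n = h n)"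
  using dec_conj[OF dec_le[of f g h] dec_le[of f h g]] by (simp add: order_eq_iff)

lemma dec_const: "dec f (\<lambda>n. b)"
  unfolding dec_def by (cases b) (auto intro: comp_const)

lemma comp_if: "dec f P \<Longrightarrow> rc f g \<Longrightarrow> rc f h \<Longrightarrow> rc f (\<lambda>n. if P n then g n else h n)"
  unfolding dec_def
  by (rule comp_cong[where g="\<lambda>n. (if P n then 1 else 0) * g n + (1 - (if P n then 1 else 0)) * h n"])
    (auto intro!: comp_times comp_plus comp_minus comp_const)

lemma dec_even: "rc f g \<Longrightarrow> dec f (\<lambda>n. even (g n))"
proof -
  assume g: "rc f g"
  have "rc f (\<lambda>m. 1 - pd2 m)" by (intro comp_minus comp_const comp_snd)
  from comp_rec1[OF this, of 1]
  have "rc f (\<lambda>n. rec_nat 1 (\<lambda>k r. 1 - r) n)" by simp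
  moreover have "rec_nat (1::nat) (\<lambda>k r. 1 - r) n = (if even n then 1 else 0)" for n :: nat by (induction n) auto
  ultimately have "dec f even" unfolding dec_def by simp
  from comp_compose[OF this[unfolded dec_def] g] show ?thesis unfolding dec_def .
qed

lemma comp_div2: "rc f g \<Longrightarrow> rc f (\<lambda>n. g n div 2)"
proof -
  assume g: "rc f g"
  have "rc f (\<lambda>m. pd2 m + (if even (pd1 m) then 0 else 1))"
    by (intro comp_plus comp_snd comp_if dec_even comp_fst comp_const)
  from comp_rec1[OF this, of 0]
  have "rc f (\<lambda>n. rec_nat 0 (\<lambda>k r. r + (if even k then 0 else 1)) n)" by simp
  moreover have "rec_nat 0 (\<lambda>k r. r + (if even k then 0 else 1)) n = n div 2" for n :: nat
    by (induction n) auto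
  ultimately have "rc f (\<lambda>n. n div 2)" by simp
  from comp_compose[OF this g] show ?thesis .
qed

lemma comp_search:
  assumes "rc f g" "\<And>a. \<exists>k. g (pe a k) = 0"
  shows "rc f (\<lambda>a. LEAST k. g (pe a k) = 0)"
proof -
  obtain c where c: "\<forall>n. eval f c n (g n)" using assms(1) unfolding rc_def by auto
  have "eval f (CRfind c) a (LEAST k. g (pe a k) = 0)" for a
  proof (rule eval.rfind)
    from LeastI_ex[OF assms(2)[of a]] c
    show "eval f c (pe a (LEAST k. g (pe a k) = 0)) 0" by metis
    show "\<forall>i<(LEAST k. g (pe a k) = 0). \<exists>v. v \<noteq> 0 \<and> eval f c (pe a i) v"
      using not_less_Least c by blast
  qed
  then show ?thesis unfolding rc_def by blast
qed



fun subst :: "rcode \<Rightarrow> rcode \<Rightarrow> rcode" where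
  "subst d COracle = d"
| "subst d (CPair a b) = CPair (subst d a) (subst d b)"
| "subst d (CComp a b) = CComp (subst d a) (subst d b)"
| "subst d (CPrec a b) = CPrec (subst d a) (subst d b)"
| "subst d (CRfind a) = CRfind (subst d a)"
| "subst d CZero = CZero"
| "subst d CSucc = CSucc"
| "subst d CLeft = CLeft"
| "subst d CRight = CRight"

lemma eval_subst:
  assumes "eval g c n v" "\<forall>m. eval f d m (g m)"
  shows "eval f (subst d c) n v"
  using assms
proof (induction rule: eval.induct)
  case (zero n) then show ?case by (simp add: eval.zero)
next
  case (succ n) then show ?case by (simp add: eval.succ)
next
  case (left n) then show ?case by (simp add: eval.left)
next
  case (right n) then show ?case by (simp add: eval.right)
next
  case (query n) then show ?case by simp
next
  case (pair c n a d b) then show ?case by (simp add: eval.pair)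
next
  case (comp d n a c b) then show ?case using eval.comp by simp
next
  case (prec0 f' a r h) then show ?case by (simp add: eval.prec0)
next
  case (precS f' h a k r s) then show ?case using eval.precS by simp
next
  case (rfind f' a k)
  have 1: "eval f (subst d f') (pe a k) 0" using rfind by blast
  have 2: "\<forall>i<k. \<exists>v. v \<noteq> 0 \<and> eval f (subst d f') (pe a i) v" using rfind by blast
  show ?case using eval.rfind[OF 1 2] by simp
qed

lemma rc_trans: "rc g h \<Longrightarrow> rc f g \<Longrightarrow> rc f h"
  unfolding rc_def using eval_subst by blast

lemma dec_trans: "dec g P \<Longrightarrow> rc f g \<Longrightarrow> dec f P"
  unfolding dec_def using rc_trans by blast

lemma dec_comp: "dec f P \<Longrightarrow> rc f g \<Longrightarrow> dec f (\<lambda>n. P (g n))"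
  unfolding dec_def using comp_compose[of f "\<lambda>n. if P n then 1 else 0" g] by simp

lemma tle_iff: "A \<le>\<^sub>T B \<longleftrightarrow> rc (chi B) (chi A)"
  unfolding turing_le_def rc_def ..

lemma tle_refl: "A \<le>\<^sub>T A"
  unfolding tle_iff by (rule comp_oracle)

lemma tle_trans: "A \<le>\<^sub>T B \<Longrightarrow> B \<le>\<^sub>T C \<Longrightarrow> A \<le>\<^sub>T C"
  unfolding tle_iff using rc_trans by blast

lemma teq_tdeg: "turing_eq A B \<Longrightarrow> tdeg A = tdeg B"
  unfolding tdeg_def turing_eq_def using tle_trans by blast

lemma dec_chi: "dec (chi A) (\<lambda>n. n \<in> A)"
  unfolding dec_def using comp_oracle[of "chi A"] by (simp add: chi_def[abs_def])

lemma dec_iff_chi: "dec f (\<lambda>n. n \<in> A) \<longleftrightarrow> rc f (chi A)"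
  unfolding dec_def chi_def ..

definition sig1 :: "(nat \<Rightarrow> nat) \<Rightarrow> (nat \<Rightarrow> bool) \<Rightarrow> bool" where
  "sig1 f P \<longleftrightarrow> (\<exists>Q. dec f Q \<and> (\<forall>n. P n = (\<exists>m. Q (pe n m))))"

lemma sig1_cong: "sig1 f P \<Longrightarrow> (\<And>n. P n = P' n) \<Longrightarrow> sig1 f P'"
  unfolding sig1_def by simp

lemma dec_sig1: "dec f P \<Longrightarrow> sig1 f P"
  unfolding sig1_def
  by (rule exI[where x="\<lambda>p. P (pd1 p)"]) (auto intro: dec_comp comp_fst)

lemma sig1_trans: "sig1 g P \<Longrightarrow> rc f g \<Longrightarrow> sig1 f P"
  unfolding sig1_def using dec_trans by blast

lemma sig1_comp: "sig1 f P \<Longrightarrow> rc f g \<Longrightarrow> sig1 f (\<lambda>n. P (g n))"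
proof -
  assume "sig1 f P" "rc f g"
  then obtain Q where Q: "dec f Q" "\<And>n. P n = (\<exists>m. Q (pe n m))" unfolding sig1_def by auto
  have "dec f (\<lambda>p. Q (pe (g (pd1 p)) (pd2 p)))"
    by (intro dec_comp[OF Q(1)] comp_pair comp_compose[OF \<open>rc f g\<close>] comp_fst comp_snd)
  then show ?thesis unfolding sig1_def using Q(2) by (intro exI[of _ "\<lambda>p. Q (pe (g (pd1 p)) (pd2 p))"]) auto
qed

lemma sig1_conj: "sig1 f P \<Longrightarrow> sig1 f R \<Longrightarrow> sig1 f (\<lambda>n. P n \<and> R n)"
proof -
  assume "sig1 f P" "sig1 f R"
  then obtain Q1 Q2 where Q: "dec f Q1" "\<And>n. P n = (\<exists>m. Q1 (pe n m))"
    "dec f Q2" "\<And>n. R n = (\<exists>m. Q2 (pe n m))" unfolding sig1_def by metis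
  let ?Q = "\<lambda>p. Q1 (pe (pd1 p) (pd1 (pd2 p))) \<and> Q2 (pe (pd1 p) (pd2 (pd2 p)))"
  have "dec f ?Q"
    by (intro dec_conj dec_comp[OF Q(1)] dec_comp[OF Q(3)] comp_pair comp_fst
        comp_compose[OF comp_fst comp_snd] comp_compose[OF comp_snd comp_snd])
  moreover have "(P n \<and> R n) = (\<exists>m. ?Q (pe n m))" for n
  proof
    assume "P n \<and> R n"
    then obtain m1 m2 where "Q1 (pe n m1)" "Q2 (pe n m2)" using Q by auto
    then show "\<exists>m. ?Q (pe n m)" by (intro exI[of _ "pe m1 m2"]) simp
  qed (auto simp: Q)
  ultimately show ?thesis unfolding sig1_def by blast
qed

lemma sig1_ex: "sig1 f (\<lambda>p. P (pd1 p) (pd2 p)) \<Longrightarrow> sig1 f (\<lambda>n. \<exists>m. P n m)"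
proof -
  assume "sig1 f (\<lambda>p. P (pd1 p) (pd2 p))"
  then obtain Q where Q: "dec f Q" "\<And>p. P (pd1 p) (pd2 p) = (\<exists>m. Q (pe p m))" unfolding sig1_def by auto
  let ?Q = "\<lambda>p. Q (pe (pe (pd1 p) (pd1 (pd2 p))) (pd2 (pd2 p)))"
  have "dec f ?Q"
    by (intro dec_comp[OF Q(1)] comp_pair comp_fst
        comp_compose[OF comp_fst comp_snd] comp_compose[OF comp_snd comp_snd])
  moreover have "(\<exists>m. P n m) = (\<exists>w. ?Q (pe n w))" for n
  proof
    assume "\<exists>m. P n m"
    then obtain m where "P n m" by auto
    then obtain m' where "Q (pe (pe n m) m')" using Q(2)[of "pe n m"] by auto
    then show "\<exists>w. ?Q (pe n w)" by (intro exI[of _ "pe m m'"]) simp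
  next
    assume "\<exists>w. ?Q (pe n w)"
    then obtain w where "?Q (pe n w)" by auto
    then have "P n (pd1 w)" using Q(2)[of "pe n (pd1 w)"] by auto
    then show "\<exists>m. P n m" by auto
  qed
  ultimately show ?thesis unfolding sig1_def by blast
qed

lemma sig1_decide:
  assumes "sig1 f P" "sig1 f (\<lambda>n. \<not> P n)"
  shows "dec f P"
proof -
  obtain Q1 Q2 where Q: "dec f Q1" "\<And>n. P n = (\<exists>m. Q1 (pe n m))"
    "dec f Q2" "\<And>n. (\<not> P n) = (\<exists>m. Q2 (pe n m))" using assms unfolding sig1_def by metis
  let ?G = "\<lambda>p. if Q1 p \<or> Q2 p then 0 else (1::nat)"
  have G: "rc f ?G" by (intro comp_if dec_disj Q(1) Q(3) comp_const)
  have ex: "\<exists>k. ?G (pe a k) = 0" for a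
    using Q(2)[of a] Q(4)[of a] by (cases "P a") auto
  define M where "M = (\<lambda>a. LEAST k. ?G (pe a k) = 0)"
  have M: "rc f M" unfolding M_def by (rule comp_search[OF G ex])
  have "?G (pe a (M a)) = 0" for a unfolding M_def by (rule LeastI_ex[OF ex])
  then have "P n = Q1 (pe n (M n))" for n
    using Q(2)[of n] Q(4)[of n] by (metis zero_neq_one)
  moreover have "dec f (\<lambda>n. Q1 (pe n (M n)))"
    by (intro dec_comp[OF Q(1)] comp_pair comp_id M)
  ultimately show ?thesis by (intro dec_cong[of f "\<lambda>n. Q1 (pe n (M n))" P]) auto
qed



definition ip :: "nat \<Rightarrow> nat" where "ip a = (if even a then a div 2 else 0)"
definition im :: "nat \<Rightarrow> nat" where "im a = (if even a then 0 else a div 2 + 1)"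

lemma int_decode_ipim: "int_decode a = int (ip a) - int (im a)"
  unfolding int_decode_def sum_decode_def ip_def im_def by auto

definition rq :: "nat \<Rightarrow> real" where "rq n = real_of_rat (rat_of_code n)"

definition cP :: "nat \<Rightarrow> nat" where "cP n = ip (pd1 n)"
definition cM :: "nat \<Rightarrow> nat" where "cM n = im (pd1 n)"
definition cD :: "nat \<Rightarrow> nat" where "cD n = Suc (pd2 n)"

lemma rq_eq: "rq n = (real (cP n) - real (cM n)) / real (cD n)"
proof -
  obtain a b where n: "prod_decode n = (a, b)" by (cases "prod_decode n")
  have "rat_of_code n = of_int (int_decode a) / of_nat (Suc b)"
    unfolding rat_of_code_def n by simp
  then have "rq n = real_of_int (int_decode a) / real (Suc b)"
    unfolding rq_def by (simp add: of_rat_divide of_rat_add)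
  then show ?thesis unfolding cP_def cM_def cD_def n int_decode_ipim by simp
qed

lemma cD_pos: "cD n > 0" unfolding cD_def by simp

definition ienc :: "nat \<Rightarrow> nat \<Rightarrow> nat" where
  "ienc p m = (if m \<le> p then 2 * (p - m) else 2 * (m - p) - 1)"

lemma int_decode_ienc: "int_decode (ienc p m) = int p - int m"
proof (cases "m \<le> p")
  case True
  then have "int_decode (ienc p m) = int_decode (int_encode (int p - int m))"
    unfolding ienc_def int_encode_def sum_encode_def by (simp add: nat_diff_distrib)
  then show ?thesis by simp
next
  case False
  then have "ienc p m = int_encode (int p - int m)"
    unfolding ienc_def int_encode_def sum_encode_def by simp
  then show ?thesis by simp
qed

definition mkcode :: "nat \<Rightarrow> nat \<Rightarrow> nat \<Rightarrow> nat" where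
  "mkcode p m d = pe (ienc p m) (d - 1)"

lemma rq_mkcode: "d > 0 \<Longrightarrow> rq (mkcode p m d) = (real p - real m) / real d"
  unfolding rq_def mkcode_def rat_of_code_def
  by (simp add: int_decode_ienc of_rat_divide of_rat_diff)

lemma comp_ienc: "rc f g \<Longrightarrow> rc f h \<Longrightarrow> rc f (\<lambda>n. ienc (g n) (h n))"
  unfolding ienc_def by (intro comp_if dec_le comp_times comp_minus comp_const)

lemma comp_mkcode: "rc f g \<Longrightarrow> rc f h \<Longrightarrow> rc f k \<Longrightarrow> rc f (\<lambda>n. mkcode (g n) (h n) (k n))"
  unfolding mkcode_def by (intro comp_pair comp_ienc comp_minus comp_const)

lemma comp_ip: "rc f g \<Longrightarrow> rc f (\<lambda>n. ip (g n))"
  unfolding ip_def by (intro comp_if dec_even comp_div2 comp_const)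
lemma comp_im: "rc f g \<Longrightarrow> rc f (\<lambda>n. im (g n))"
  unfolding im_def by (intro comp_if dec_even comp_div2 comp_const comp_plus)

lemma comp_cP: "rc f g \<Longrightarrow> rc f (\<lambda>n. cP (g n))"
  unfolding cP_def by (intro comp_ip comp_compose[OF comp_fst])
lemma comp_cM: "rc f g \<Longrightarrow> rc f (\<lambda>n. cM (g n))"
  unfolding cM_def by (intro comp_im comp_compose[OF comp_fst])
lemma comp_cD: "rc f g \<Longrightarrow> rc f (\<lambda>n. cD (g n))"
  unfolding cD_def by (intro comp_Suc comp_compose[OF comp_snd])

definition qadd :: "nat \<Rightarrow> nat \<Rightarrow> nat" where
  "qadd a b = mkcode (cP a * cD b + cP b * cD a) (cM a * cD b + cM b * cD a) (cD a * cD b)"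
definition qmul :: "nat \<Rightarrow> nat \<Rightarrow> nat" where
  "qmul a b = mkcode (cP a * cP b + cM a * cM b) (cP a * cM b + cM a * cP b) (cD a * cD b)"
definition qneg :: "nat \<Rightarrow> nat" where
  "qneg a = mkcode (cM a) (cP a) (cD a)"

lemma rq_qadd: "rq (qadd a b) = rq a + rq b"
  unfolding qadd_def
  apply (subst rq_mkcode) using cD_pos apply simp
  using cD_pos[of a] cD_pos[of b] by (simp add: rq_eq[of a] rq_eq[of b] field_simps)

lemma rq_qmul: "rq (qmul a b) = rq a * rq b"
  unfolding qmul_def
  apply (subst rq_mkcode) using cD_pos apply simp
  apply (simp add: rq_eq[of a] rq_eq[of b] field_simps)
  done

lemma rq_qneg: "rq (qneg a) = - rq a"
  unfolding qneg_def
  apply (subst rq_mkcode) using cD_pos apply simp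
  apply (simp add: rq_eq[of a] minus_divide_left)
  done

lemma comp_qadd: "rc f g \<Longrightarrow> rc f h \<Longrightarrow> rc f (\<lambda>n. qadd (g n) (h n))"
  unfolding qadd_def by (intro comp_mkcode comp_plus comp_times comp_cP comp_cM comp_cD)
lemma comp_qmul: "rc f g \<Longrightarrow> rc f h \<Longrightarrow> rc f (\<lambda>n. qmul (g n) (h n))"
  unfolding qmul_def by (intro comp_mkcode comp_plus comp_times comp_cP comp_cM comp_cD)
lemma comp_qneg: "rc f g \<Longrightarrow> rc f (\<lambda>n. qneg (g n))"
  unfolding qneg_def by (intro comp_mkcode comp_cP comp_cM comp_cD)

lemma rq_less_iff: "rq a < rq b \<longleftrightarrow> cP a * cD b + cM b * cD a < cP b * cD a + cM a * cD b"
proof -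
  have da: "real (cD a) > 0" and db: "real (cD b) > 0" using cD_pos by auto
  have "rq a < rq b \<longleftrightarrow> (real (cP a) - real (cM a)) * real (cD b) < (real (cP b) - real (cM b)) * real (cD a)"
    unfolding rq_eq using da db by (simp add: divide_less_eq less_divide_eq field_simps)
  also have "\<dots> \<longleftrightarrow> real (cP a * cD b + cM b * cD a) < real (cP b * cD a + cM a * cD b)"
    by (simp add: algebra_simps)
  finally show ?thesis by (simp only: of_nat_less_iff)
qed

lemma dec_rq_less: "rc f g \<Longrightarrow> rc f h \<Longrightarrow> dec f (\<lambda>n. rq (g n) < rq (h n))"
  unfolding rq_less_iff by (intro dec_less comp_plus comp_times comp_cP comp_cM comp_cD)

lemma rq_surj: "\<exists>n. rq n = real_of_rat c"
proof -
  obtain a b where q: "quotient_of c = (a, b)" by (cases "quotient_of c")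
  then have b: "b > 0" and c: "c = of_int a / of_int b" using quotient_of_denom_pos quotient_of_div by blast+
  have "rat_of_code (pe (int_encode a) (nat b - 1)) = c"
    unfolding rat_of_code_def using b c by simp
  then show ?thesis unfolding rq_def by blast
qed

definition c0 :: nat where "c0 = mkcode 0 0 1"
definition c1 :: nat where "c1 = mkcode 1 0 1"
lemma rq_c0: "rq c0 = 0" unfolding c0_def by (simp add: rq_mkcode)
lemma rq_c1: "rq c1 = 1" unfolding c1_def by (simp add: rq_mkcode)



lemma comp_fs: "rc f (\<lambda>n. pd1 (pd2 n))" by (rule comp_compose[OF comp_fst comp_snd])
lemma comp_ss: "rc f (\<lambda>n. pd2 (pd2 n))" by (rule comp_compose[OF comp_snd comp_snd])

definition Lc :: "(nat \<Rightarrow> nat) \<Rightarrow> real \<Rightarrow> bool" where "Lc f x \<longleftrightarrow> sig1 f (\<lambda>n. rq n < x)"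
definition Uc :: "(nat \<Rightarrow> nat) \<Rightarrow> real \<Rightarrow> bool" where "Uc f x \<longleftrightarrow> sig1 f (\<lambda>n. x < rq n)"

lemma real_cut_rq: "n \<in> real_cut x \<longleftrightarrow> rq n < x"
  unfolding real_cut_def rq_def by simp

lemma dense_rq: "a < b \<Longrightarrow> \<exists>m. a < rq m \<and> rq m < b"
  using of_rat_dense rq_surj by metis

lemma rq_rat: "rq n \<in> \<rat>" unfolding rq_def by simp

lemma sig1_ex1:
  assumes "sig1 f A" "dec f (\<lambda>p. D (pd1 p) (pd2 p))" "\<And>n. P n \<longleftrightarrow> (\<exists>a. A a \<and> D n a)"
  shows "sig1 f P"
proof -
  have "sig1 f (\<lambda>p. A (pd2 p) \<and> D (pd1 p) (pd2 p))"
    by (intro sig1_conj sig1_comp[OF assms(1)] comp_snd dec_sig1 assms(2))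
  from sig1_ex[OF this] have "sig1 f (\<lambda>n. \<exists>m. A m \<and> D n m)" by simp
  then show ?thesis by (rule sig1_cong) (simp add: assms(3))
qed

lemma sig1_ex2:
  assumes "sig1 f A" "sig1 f B" "dec f (\<lambda>p. D (pd1 p) (pd1 (pd2 p)) (pd2 (pd2 p)))"
    "\<And>n. P n \<longleftrightarrow> (\<exists>a b. A a \<and> B b \<and> D n a b)"
  shows "sig1 f P"
proof -
  have "sig1 f (\<lambda>p. A (pd1 (pd2 p)) \<and> B (pd2 (pd2 p)) \<and> D (pd1 p) (pd1 (pd2 p)) (pd2 (pd2 p)))"
    by (intro sig1_conj sig1_comp[OF assms(1)] sig1_comp[OF assms(2)] comp_fs comp_ss dec_sig1 assms(3))
  from sig1_ex[OF this] have "sig1 f (\<lambda>n. \<exists>w. A (pd1 w) \<and> B (pd2 w) \<and> D n (pd1 w) (pd2 w))" by simp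
  then show ?thesis
  proof (rule sig1_cong)
    fix n
    show "(\<exists>w. A (pd1 w) \<and> B (pd2 w) \<and> D n (pd1 w) (pd2 w)) = P n"
      unfolding assms(4)
    proof
      assume "\<exists>a b. A a \<and> B b \<and> D n a b"
      then obtain a b where "A a \<and> B b \<and> D n a b" by blast
      then show "\<exists>w. A (pd1 w) \<and> B (pd2 w) \<and> D n (pd1 w) (pd2 w)" by (intro exI[of _ "pe a b"]) simp
    qed blast
  qed
qed

lemma cut_dec:
  assumes "Lc f x" "Uc f x"
  shows "rc f (chi (real_cut x))"
proof -
  have "dec f (\<lambda>n. rq n < x)"
  proof (cases "x \<in> \<rat>")
    case True
    then obtain c where "x = real_of_rat c" by (auto elim: Rats_cases)
    then obtain n0 where n0: "rq n0 = x" using rq_surj by metis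
    have "dec f (\<lambda>n. rq n < rq n0)" by (intro dec_rq_less comp_id comp_const)
    then show ?thesis using n0 by simp
  next
    case False
    then have "rq n \<noteq> x" for n using rq_rat by metis
    then have "(\<not> rq n < x) = (x < rq n)" for n by (meson linorder_neqE_linordered_idom order.asym)
    then have "sig1 f (\<lambda>n. \<not> rq n < x)" using assms(2) unfolding Uc_def by simp
    then show ?thesis using sig1_decide assms(1) unfolding Lc_def by blast
  qed
  then show ?thesis unfolding dec_iff_chi[symmetric] real_cut_rq .
qed

lemma Lc_self: "Lc (chi (real_cut x)) x"
  unfolding Lc_def using dec_sig1[OF dec_chi[of "real_cut x"]] by (simp add: real_cut_rq)

lemma Uc_self: "Uc (chi (real_cut x)) x"
  unfolding Uc_def
proof (rule sig1_ex1[where A="\<lambda>m. \<not> m \<in> real_cut x" and D="\<lambda>n m. rq m < rq n"])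
  show "sig1 (chi (real_cut x)) (\<lambda>m. m \<notin> real_cut x)"
    by (intro dec_sig1 dec_not dec_chi)
  show "dec (chi (real_cut x)) (\<lambda>p. rq (pd2 p) < rq (pd1 p))"
    by (intro dec_rq_less comp_fst comp_snd)
  fix n
  show "(x < rq n) = (\<exists>m. m \<notin> real_cut x \<and> rq m < rq n)"
  proof
    assume "x < rq n"
    then obtain m where "x < rq m" "rq m < rq n" using dense_rq by blast
    then show "\<exists>m. m \<notin> real_cut x \<and> rq m < rq n" by (intro exI[of _ m]) (simp add: real_cut_rq)
  qed (auto simp: real_cut_rq)
qed

lemma Lc_trans: "Lc g x \<Longrightarrow> rc f g \<Longrightarrow> Lc f x" unfolding Lc_def using sig1_trans by blast
lemma Uc_trans: "Uc g x \<Longrightarrow> rc f g \<Longrightarrow> Uc f x" unfolding Uc_def using sig1_trans by blast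

lemma Lc_rat: "Lc f (rq k)" unfolding Lc_def by (intro dec_sig1 dec_rq_less comp_id comp_const)
lemma Uc_rat: "Uc f (rq k)" unfolding Uc_def by (intro dec_sig1 dec_rq_less comp_id comp_const)

lemma Lc_add: assumes "Lc f x" "Lc f y" shows "Lc f (x + y)"
  unfolding Lc_def
proof (rule sig1_ex2[OF assms[unfolded Lc_def], where D="\<lambda>n a b. rq n < rq (qadd a b)"])
  show "dec f (\<lambda>p. rq (pd1 p) < rq (qadd (pd1 (pd2 p)) (pd2 (pd2 p))))"
    by (intro dec_rq_less comp_fst comp_qadd comp_fs comp_ss)
  fix n
  show "(rq n < x + y) = (\<exists>a b. rq a < x \<and> rq b < y \<and> rq n < rq (qadd a b))"
  proof
    assume h: "rq n < x + y"
    define e where "e = (x + y - rq n) / 2"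
    have e: "e > 0" using h unfolding e_def by simp
    obtain a where a: "x - e < rq a" "rq a < x" using dense_rq[of "x - e" x] e by auto
    obtain b where b: "y - e < rq b" "rq b < y" using dense_rq[of "y - e" y] e by auto
    have "rq n < rq (qadd a b)" using a b unfolding rq_qadd e_def by (simp add: field_simps)
    then show "\<exists>a b. rq a < x \<and> rq b < y \<and> rq n < rq (qadd a b)" using a b by blast
  qed (auto simp: rq_qadd)
qed

lemma Uc_add: assumes "Uc f x" "Uc f y" shows "Uc f (x + y)"
  unfolding Uc_def
proof (rule sig1_ex2[OF assms[unfolded Uc_def], where D="\<lambda>n a b. rq (qadd a b) < rq n"])
  show "dec f (\<lambda>p. rq (qadd (pd1 (pd2 p)) (pd2 (pd2 p))) < rq (pd1 p))"
    by (intro dec_rq_less comp_fst comp_qadd comp_fs comp_ss)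
  fix n
  show "(x + y < rq n) = (\<exists>a b. x < rq a \<and> y < rq b \<and> rq (qadd a b) < rq n)"
  proof
    assume h: "x + y < rq n"
    define e where "e = (rq n - (x + y)) / 2"
    have e: "e > 0" using h unfolding e_def by simp
    obtain a where a: "x < rq a" "rq a < x + e" using dense_rq[of x "x + e"] e by auto
    obtain b where b: "y < rq b" "rq b < y + e" using dense_rq[of y "y + e"] e by auto
    have "rq (qadd a b) < rq n" using a b unfolding rq_qadd e_def by (simp add: field_simps)
    then show "\<exists>a b. x < rq a \<and> y < rq b \<and> rq (qadd a b) < rq n" using a b by blast
  qed (auto simp: rq_qadd)
qed

lemma Lc_neg: assumes "Uc f x" shows "Lc f (- x)"
  unfolding Lc_def
proof (rule sig1_ex1[OF assms[unfolded Uc_def], where D="\<lambda>n a. rq n < rq (qneg a)"])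
  show "dec f (\<lambda>p. rq (pd1 p) < rq (qneg (pd2 p)))"
    by (intro dec_rq_less comp_fst comp_qneg comp_snd)
  fix n
  show "(rq n < - x) = (\<exists>a. x < rq a \<and> rq n < rq (qneg a))"
  proof
    assume h: "rq n < - x"
    then obtain a where "x < rq a" "rq a < - rq n" using dense_rq[of x "- rq n"] by auto
    then show "\<exists>a. x < rq a \<and> rq n < rq (qneg a)" by (auto simp: rq_qneg)
  qed (auto simp: rq_qneg)
qed

lemma Uc_neg: assumes "Lc f x" shows "Uc f (- x)"
  unfolding Uc_def
proof (rule sig1_ex1[OF assms[unfolded Lc_def], where D="\<lambda>n a. rq (qneg a) < rq n"])
  show "dec f (\<lambda>p. rq (qneg (pd2 p)) < rq (pd1 p))"
    by (intro dec_rq_less comp_fst comp_qneg comp_snd)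
  fix n
  show "(- x < rq n) = (\<exists>a. rq a < x \<and> rq (qneg a) < rq n)"
  proof
    assume h: "- x < rq n"
    then obtain a where "- rq n < rq a" "rq a < x" using dense_rq[of "- rq n" x] by auto
    then show "\<exists>a. rq a < x \<and> rq (qneg a) < rq n" by (auto simp: rq_qneg)
  qed (auto simp: rq_qneg)
qed



lemma Lc_mul: assumes "Lc f x" "Lc f y" "0 < x" "0 < y" shows "Lc f (x * y)"
  unfolding Lc_def
proof (rule sig1_ex2[OF assms(1,2)[unfolded Lc_def],
      where D="\<lambda>n a b. \<not> rq c0 < rq n \<or> (rq c0 < rq a \<and> rq c0 < rq b \<and> rq n < rq (qmul a b))"])
  show "dec f (\<lambda>p. \<not> rq c0 < rq (pd1 p) \<or> (rq c0 < rq (pd1 (pd2 p)) \<and> rq c0 < rq (pd2 (pd2 p)) \<and>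
      rq (pd1 p) < rq (qmul (pd1 (pd2 p)) (pd2 (pd2 p)))))"
    by (intro dec_disj dec_not dec_conj dec_rq_less comp_const comp_fst comp_qmul comp_fs comp_ss)
  fix n
  show "(rq n < x * y) = (\<exists>a b. rq a < x \<and> rq b < y \<and>
      (\<not> rq c0 < rq n \<or> (rq c0 < rq a \<and> rq c0 < rq b \<and> rq n < rq (qmul a b))))"
    unfolding rq_c0 rq_qmul
  proof
    assume h: "rq n < x * y"
    show "\<exists>a b. rq a < x \<and> rq b < y \<and> (\<not> 0 < rq n \<or> (0 < rq a \<and> 0 < rq b \<and> rq n < rq a * rq b))"
    proof (cases "0 < rq n")
      case False
      obtain a where "rq a < x" using dense_rq[of "x - 1" x] by auto
      moreover obtain b where "rq b < y" using dense_rq[of "y - 1" y] by auto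
      ultimately show ?thesis using False by blast
    next
      case True
      have "rq n / y < x" using h assms(4) by (simp add: divide_less_eq mult.commute)
      then obtain a where a: "rq n / y < rq a" "rq a < x" using dense_rq by blast
      have a0: "0 < rq a" using a(1) True assms(4) by (smt (verit) divide_pos_pos)
      have "rq n < rq a * y" using a(1) assms(4) by (simp add: divide_less_eq)
      then have "rq n / rq a < y" using a0 by (simp add: divide_less_eq mult.commute)
      then obtain b where b: "rq n / rq a < rq b" "rq b < y" using dense_rq by blast
      have b0: "0 < rq b" using b(1) True a0 by (smt (verit) divide_pos_pos)
      have "rq n < rq a * rq b" using b(1) a0 by (simp add: divide_less_eq mult.commute)
      then show ?thesis using a b a0 b0 True by blast
    qed
  next
    assume "\<exists>a b. rq a < x \<and> rq b < y \<and> (\<not> 0 < rq n \<or> (0 < rq a \<and> 0 < rq b \<and> rq n < rq a * rq b))"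
    then obtain a b where ab: "rq a < x" "rq b < y" "\<not> 0 < rq n \<or> (0 < rq a \<and> 0 < rq b \<and> rq n < rq a * rq b)" by blast
    show "rq n < x * y"
    proof (cases "0 < rq n")
      case False then show ?thesis using assms(3,4) by (smt (verit) mult_pos_pos)
    next
      case True
      then have "0 < rq a" "0 < rq b" "rq n < rq a * rq b" using ab(3) by auto
      moreover have "rq a * rq b < x * y" using ab(1,2) \<open>0 < rq a\<close> \<open>0 < rq b\<close>
        by (intro mult_strict_mono) auto
      ultimately show ?thesis by simp
    qed
  qed
qed

lemma Uc_mul: assumes "Uc f x" "Uc f y" "0 < x" "0 < y" shows "Uc f (x * y)"
  unfolding Uc_def
proof (rule sig1_ex2[OF assms(1,2)[unfolded Uc_def], where D="\<lambda>n a b. rq (qmul a b) < rq n"])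
  show "dec f (\<lambda>p. rq (qmul (pd1 (pd2 p)) (pd2 (pd2 p))) < rq (pd1 p))"
    by (intro dec_rq_less comp_fst comp_qmul comp_fs comp_ss)
  fix n
  show "(x * y < rq n) = (\<exists>a b. x < rq a \<and> y < rq b \<and> rq (qmul a b) < rq n)"
    unfolding rq_qmul
  proof
    assume h: "x * y < rq n"
    have "x < rq n / y" using h assms(4) by (simp add: less_divide_eq)
    then obtain a where a: "x < rq a" "rq a < rq n / y" using dense_rq by blast
    have a0: "0 < rq a" using a(1) assms(3) by simp
    have "rq a * y < rq n" using a(2) assms(4) by (simp add: less_divide_eq)
    then have "y < rq n / rq a" using a0 by (simp add: less_divide_eq mult.commute)
    then obtain b where b: "y < rq b" "rq b < rq n / rq a" using dense_rq by blast
    have "rq a * rq b < rq n" using b(2) a0 by (simp add: less_divide_eq mult.commute)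
    then show "\<exists>a b. x < rq a \<and> y < rq b \<and> rq a * rq b < rq n" using a b by blast
  next
    assume "\<exists>a b. x < rq a \<and> y < rq b \<and> rq a * rq b < rq n"
    then obtain a b where ab: "x < rq a" "y < rq b" "rq a * rq b < rq n" by blast
    have "x * y < rq a * rq b" using ab assms(3,4) by (intro mult_strict_mono) auto
    then show "x * y < rq n" using ab(3) by simp
  qed
qed

lemma Lc_inv: assumes "Uc f x" "0 < x" shows "Lc f (inverse x)"
  unfolding Lc_def
proof (rule sig1_ex1[OF assms(1)[unfolded Uc_def],
      where D="\<lambda>n m. \<not> rq c0 < rq n \<or> rq (qmul n m) < rq c1"])
  show "dec f (\<lambda>p. \<not> rq c0 < rq (pd1 p) \<or> rq (qmul (pd1 p) (pd2 p)) < rq c1)"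
    by (intro dec_disj dec_not dec_rq_less comp_const comp_fst comp_snd comp_qmul)
  fix n
  show "(rq n < inverse x) = (\<exists>m. x < rq m \<and> (\<not> rq c0 < rq n \<or> rq (qmul n m) < rq c1))"
    unfolding rq_c0 rq_c1 rq_qmul
  proof
    assume h: "rq n < inverse x"
    show "\<exists>m. x < rq m \<and> (\<not> 0 < rq n \<or> rq n * rq m < 1)"
    proof (cases "0 < rq n")
      case False
      obtain m where "x < rq m" using dense_rq[of x "x + 1"] by auto
      then show ?thesis using False by blast
    next
      case True
      have "x < inverse (rq n)" using less_imp_inverse_less[OF h True] by simp
      then obtain m where m: "x < rq m" "rq m < inverse (rq n)" using dense_rq by blast
      have "rq n * rq m < 1" using m(2) True by (simp add: field_simps)
      then show ?thesis using m by blast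
    qed
  next
    assume "\<exists>m. x < rq m \<and> (\<not> 0 < rq n \<or> rq n * rq m < 1)"
    then obtain m where m: "x < rq m" "\<not> 0 < rq n \<or> rq n * rq m < 1" by blast
    show "rq n < inverse x"
    proof (cases "0 < rq n")
      case False then show ?thesis using assms(2) by (smt (verit) positive_imp_inverse_positive)
    next
      case True
      then have "rq n * x < rq n * rq m" using m(1) by simp
      then have "rq n * x < 1" using m(2) True by linarith
      then show ?thesis using assms(2) by (simp add: field_simps)
    qed
  qed
qed

lemma Uc_inv: assumes "Lc f x" "0 < x" shows "Uc f (inverse x)"
  unfolding Uc_def
proof (rule sig1_ex1[OF assms(1)[unfolded Lc_def],
      where D="\<lambda>n m. rq c0 < rq n \<and> rq c1 < rq (qmul n m)"])
  show "dec f (\<lambda>p. rq c0 < rq (pd1 p) \<and> rq c1 < rq (qmul (pd1 p) (pd2 p)))"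
    by (intro dec_conj dec_rq_less comp_const comp_fst comp_snd comp_qmul)
  fix n
  show "(inverse x < rq n) = (\<exists>m. rq m < x \<and> (rq c0 < rq n \<and> rq c1 < rq (qmul n m)))"
    unfolding rq_c0 rq_c1 rq_qmul
  proof
    assume h: "inverse x < rq n"
    have q0: "0 < rq n" using h assms(2) by (smt (verit) positive_imp_inverse_positive)
    have "inverse (rq n) < x"
      using less_imp_inverse_less[OF h positive_imp_inverse_positive[OF assms(2)]] by simp
    then obtain m where m: "inverse (rq n) < rq m" "rq m < x" using dense_rq by blast
    have "1 < rq n * rq m" using m(1) q0 by (simp add: field_simps)
    then show "\<exists>m. rq m < x \<and> 0 < rq n \<and> 1 < rq n * rq m" using m q0 by blast
  next
    assume "\<exists>m. rq m < x \<and> 0 < rq n \<and> 1 < rq n * rq m"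
    then obtain m where m: "rq m < x" "0 < rq n" "1 < rq n * rq m" by blast
    then have "rq n * rq m < rq n * x" by simp
    then have "1 < rq n * x" using m by linarith
    then show "inverse x < rq n" using assms(2) by (simp add: field_simps)
  qed
qed



definition wC :: "nat set \<Rightarrow> nat \<Rightarrow> real" where
  "wC C k = real (chi C k) / 4 ^ (k + 1)"

definition rC :: "nat set \<Rightarrow> real" where "rC C = suminf (wC C)"

definition RC :: "nat set \<Rightarrow> nat \<Rightarrow> nat" where
  "RC C n = rec_nat 0 (\<lambda>k r. 4 * r + chi C k) n"

lemma RC_0[simp]: "RC C 0 = 0" and RC_Suc[simp]: "RC C (Suc n) = 4 * RC C n + chi C n"
  unfolding RC_def by simp_all

lemma chi_le1: "chi C k \<le> 1" unfolding chi_def by simp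

lemma wC_nonneg: "0 \<le> wC C k" unfolding wC_def by simp

lemma wC_le: "wC C k \<le> (1/4) * (1/4) ^ k"
proof -
  have "wC C k \<le> 1 / 4 ^ (k + 1)" unfolding wC_def using chi_le1[of C k]
    by (simp add: divide_right_mono)
  also have "\<dots> = (1/4) * (1/4) ^ k" by (simp add: power_one_over)
  finally show ?thesis .
qed

lemma summable_wC: "summable (wC C)"
proof (rule summable_comparison_test)
  show "summable (\<lambda>k. (1/4) * (1/4::real) ^ k)" by (intro summable_mult summable_geometric) simp
  show "\<exists>N. \<forall>n\<ge>N. norm (wC C n) \<le> (1/4) * (1/4) ^ n" using wC_le wC_nonneg by auto
qed

lemma sum_wC: "(\<Sum>i<n. wC C i) = real (RC C n) / 4 ^ n"
proof (induction n)
  case (Suc n)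
  then show ?case unfolding wC_def by (simp add: field_simps)
qed simp

lemma tail_bounds: "0 \<le> rC C - real (RC C n) / 4 ^ n \<and> rC C - real (RC C n) / 4 ^ n \<le> (1/4) ^ n / 3"
proof -
  have sp: "rC C = (\<Sum>k. wC C (k + n)) + real (RC C n) / 4 ^ n"
    unfolding rC_def using suminf_split_initial_segment[OF summable_wC, of C n] sum_wC by simp
  have st: "summable (\<lambda>k. wC C (k + n))" using summable_wC summable_iff_shift by blast
  have geo: "(\<lambda>k. (1/4) ^ n * ((1/4) * (1/4::real) ^ k)) sums ((1/4) ^ n / 3)"
  proof -
    have "(\<lambda>k. (1/4::real) ^ k) sums (1 / (1 - 1/4))" by (rule geometric_sums) simp
    from sums_mult[OF this, of "(1/4) ^ n * (1/4)"] show ?thesis by (simp add: mult.assoc)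
  qed
  have le: "wC C (k + n) \<le> (1/4) ^ n * ((1/4) * (1/4::real) ^ k)" for k
    using wC_le[of C "k + n"] by (simp add: power_add mult_ac)
  have "(\<Sum>k. wC C (k + n)) \<le> (1/4) ^ n / 3"
    using suminf_le[OF le st sums_summable[OF geo]] sums_unique[OF geo] by simp
  moreover have "0 \<le> (\<Sum>k. wC C (k + n))" by (intro suminf_nonneg st wC_nonneg)
  ultimately show ?thesis using sp by simp
qed

lemma small_pow: "0 < (e::real) \<Longrightarrow> \<exists>n. (1/4) ^ n < e"
  using real_arch_pow_inv[of e "1/4"] by simp

definition sC :: "nat set \<Rightarrow> nat \<Rightarrow> nat" where "sC C n = mkcode (RC C n) 0 (4 ^ n)"
definition uC :: "nat set \<Rightarrow> nat \<Rightarrow> nat" where "uC C n = mkcode (RC C n + 1) 0 (4 ^ n)"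

lemma rq_sC: "rq (sC C n) = real (RC C n) / 4 ^ n"
  unfolding sC_def by (subst rq_mkcode) auto
lemma rq_uC: "rq (uC C n) = real (RC C n) / 4 ^ n + (1/4) ^ n"
  unfolding uC_def by (subst rq_mkcode) (auto simp: add_divide_distrib power_one_over)

lemma comp_RC: "rc (chi C) (RC C)"
proof -
  have "rc (chi C) (\<lambda>m. 4 * pd2 m + chi C (pd1 m))"
    by (intro comp_plus comp_times comp_const comp_snd comp_compose[OF comp_oracle] comp_fst)
  from comp_rec1[OF this, of 0] show ?thesis unfolding RC_def by simp
qed

lemma comp_pow4': "rc f (\<lambda>n. 4 ^ n)" using comp_pow4[OF comp_id] .

lemma cutC_le: "real_cut (rC C) \<le>\<^sub>T C"
  unfolding tle_iff
proof (rule cut_dec)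
  show "Lc (chi C) (rC C)"
    unfolding Lc_def
  proof (rule sig1_ex1[where A="\<lambda>_. True" and D="\<lambda>q n. rq q < rq (sC C n)"])
    show "sig1 (chi C) (\<lambda>_. True)" by (intro dec_sig1 dec_const)
    show "dec (chi C) (\<lambda>p. rq (pd1 p) < rq (sC C (pd2 p)))"
      unfolding sC_def by (intro dec_rq_less comp_fst comp_mkcode comp_compose[OF comp_RC] comp_snd
          comp_const comp_pow4)
    fix q
    show "(rq q < rC C) = (\<exists>n. True \<and> rq q < rq (sC C n))"
    proof
      assume "rq q < rC C"
      then obtain n where n: "(1/4) ^ n < rC C - rq q" using small_pow by (metis diff_gt_0_iff_gt)
      have "(1/4::real) ^ n / 3 < (1/4) ^ n" by simp
      then have "rq q < real (RC C n) / 4 ^ n" using n tail_bounds[of C n] by linarith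
      then show "\<exists>n. True \<and> rq q < rq (sC C n)" unfolding rq_sC by blast
    next
      assume "\<exists>n. True \<and> rq q < rq (sC C n)"
      then obtain n where "rq q < real (RC C n) / 4 ^ n" unfolding rq_sC by blast
      then show "rq q < rC C" using tail_bounds[of C n] by linarith
    qed
  qed
  show "Uc (chi C) (rC C)"
    unfolding Uc_def
  proof (rule sig1_ex1[where A="\<lambda>_. True" and D="\<lambda>q n. rq (uC C n) < rq q"])
    show "sig1 (chi C) (\<lambda>_. True)" by (intro dec_sig1 dec_const)
    show "dec (chi C) (\<lambda>p. rq (uC C (pd2 p)) < rq (pd1 p))"
      unfolding uC_def by (intro dec_rq_less comp_fst comp_mkcode comp_plus comp_compose[OF comp_RC] comp_snd
          comp_const comp_pow4)
    fix q
    show "(rC C < rq q) = (\<exists>n. True \<and> rq (uC C n) < rq q)"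
    proof
      assume "rC C < rq q"
      then obtain n where n: "(1/4) ^ n < rq q - rC C" using small_pow by (metis diff_gt_0_iff_gt)
      then have "real (RC C n) / 4 ^ n + (1/4) ^ n < rq q" using tail_bounds[of C n] by linarith
      then show "\<exists>n. True \<and> rq (uC C n) < rq q" unfolding rq_uC by blast
    next
      assume "\<exists>n. True \<and> rq (uC C n) < rq q"
      then obtain n where "rq (uC C n) < rq q" by blast
      moreover have "(1/4::real) ^ n / 3 < (1/4) ^ n" by simp
      ultimately show "rC C < rq q" using tail_bounds[of C n] unfolding rq_uC by linarith
    qed
  qed
qed

definition mC :: "nat \<Rightarrow> nat \<Rightarrow> nat" where "mC R k = mkcode (8 * R + 1) 0 (2 * 4 ^ Suc k)"

lemma key_digit: "chi (real_cut (rC C)) (mC (RC C k) k) = chi C k"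
proof -
  have q: "rq (mC (RC C k) k) = real (RC C k) / 4 ^ k + (1/4) ^ k / 8"
    unfolding mC_def by (subst rq_mkcode) (auto simp: field_simps power_one_over)
  have t: "0 \<le> rC C - real (RC C (Suc k)) / 4 ^ Suc k" "rC C - real (RC C (Suc k)) / 4 ^ Suc k \<le> (1/4) ^ Suc k / 3"
    using tail_bounds[of C "Suc k"] by auto
  have s: "real (RC C (Suc k)) / 4 ^ Suc k = real (RC C k) / 4 ^ k + real (chi C k) * (1/4) ^ k / 4"
    by (simp add: field_simps power_one_over)
  have p: "(0::real) < (1/4) ^ k" by simp
  have pw: "(1/4::real) ^ Suc k = (1/4) ^ k / 4" by simp
  show ?thesis
  proof (cases "k \<in> C")
    case True
    then have "chi C k = 1" unfolding chi_def by simp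
    then have "real (RC C (Suc k)) / 4 ^ Suc k = real (RC C k) / 4 ^ k + (1/4) ^ k / 4" using s by simp
    then have "rq (mC (RC C k) k) < rC C" using q t p by linarith
    then show ?thesis using \<open>chi C k = 1\<close> unfolding chi_def real_cut_rq by simp
  next
    case False
    then have "chi C k = 0" unfolding chi_def by simp
    then have "real (RC C (Suc k)) / 4 ^ Suc k = real (RC C k) / 4 ^ k" using s by simp
    then have "\<not> rq (mC (RC C k) k) < rC C" using q t p pw by linarith
    then show ?thesis using \<open>chi C k = 0\<close> unfolding chi_def real_cut_rq by simp
  qed
qed

lemma C_le_cut: "C \<le>\<^sub>T real_cut (rC C)"
proof -
  let ?f = "chi (real_cut (rC C))"
  define R' where "R' = (\<lambda>n. rec_nat 0 (\<lambda>k r. 4 * r + ?f (mC r k)) n)"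
  have R': "R' n = RC C n" for n
    by (induction n) (simp_all add: R'_def key_digit)
  have "rc ?f (\<lambda>m. 4 * pd2 m + ?f (mC (pd2 m) (pd1 m)))"
    unfolding mC_def by (intro comp_plus comp_times comp_const comp_snd comp_compose[OF comp_oracle] comp_mkcode
        comp_Suc comp_fst comp_pow4)
  from comp_rec1[OF this, of 0] have "rc ?f R'" unfolding R'_def by simp
  then have "rc ?f (\<lambda>n. ?f (mC (R' n) n))"
    unfolding mC_def by (intro comp_compose[OF comp_oracle] comp_mkcode comp_plus comp_times comp_const
        comp_Suc comp_id comp_pow4)
  then show ?thesis unfolding tle_iff using R' key_digit by simp
qed



lemma chi_join: "chi (A \<oplus>\<^sub>T B) n = (if even n then chi A (n div 2) else chi B (n div 2))"
proof (cases "even n")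
  case True
  then obtain m where m: "n = 2 * m" by (auto elim: evenE)
  have "n \<in> A \<oplus>\<^sub>T B \<longleftrightarrow> m \<in> A" unfolding tjoin_def m by auto presburger+
  then show ?thesis unfolding chi_def using m by simp
next
  case False
  then obtain m where m: "n = 2 * m + 1" by (auto elim: oddE)
  have "n \<in> A \<oplus>\<^sub>T B \<longleftrightarrow> m \<in> B" unfolding tjoin_def m by auto presburger+
  then show ?thesis unfolding chi_def using m by simp
qed

lemma A_le_join: "A \<le>\<^sub>T A \<oplus>\<^sub>T B"
  unfolding tle_iff
  by (rule comp_cong[OF comp_compose[OF comp_oracle comp_plus[OF comp_id comp_id]]]) (simp add: chi_join)

lemma B_le_join: "B \<le>\<^sub>T A \<oplus>\<^sub>T B"
  unfolding tle_iff
  by (rule comp_cong[OF comp_compose[OF comp_oracle comp_Suc[OF comp_plus[OF comp_id comp_id]]]])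
    (simp add: chi_join)

lemma join_le: "A \<le>\<^sub>T X \<Longrightarrow> B \<le>\<^sub>T X \<Longrightarrow> A \<oplus>\<^sub>T B \<le>\<^sub>T X"
  unfolding tle_iff
  by (rule comp_cong[where g="\<lambda>n. if even n then chi A (n div 2) else chi B (n div 2)"])
    (auto simp: chi_join intro!: comp_if dec_even comp_id comp_compose[where g="chi A"]
      comp_compose[where g="chi B"] comp_div2)

lemma empty_le: "{} \<le>\<^sub>T X"
  unfolding tle_iff by (rule comp_cong[OF comp_zero]) (simp add: chi_def)

lemma teq_join_empty1: "turing_eq (A \<oplus>\<^sub>T {}) A"
  unfolding turing_eq_def using join_le[OF tle_refl empty_le] A_le_join by blast
lemma teq_join_empty2: "turing_eq ({} \<oplus>\<^sub>T B) B"
  unfolding turing_eq_def using join_le[OF empty_le tle_refl] B_le_join by blast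
lemma teq_join_below: "B \<le>\<^sub>T A \<Longrightarrow> turing_eq (A \<oplus>\<^sub>T B) A"
  unfolding turing_eq_def using join_le[OF tle_refl] A_le_join by blast

lemma rdeg_rC: "real_deg (rC C) = tdeg C"
  unfolding real_deg_def by (rule teq_tdeg) (simp add: turing_eq_def cutC_le C_le_cut)

lemma rC_join: "rC (A \<oplus>\<^sub>T B) = rC (A \<oplus>\<^sub>T {}) + rC ({} \<oplus>\<^sub>T B)"
proof -
  have "wC (A \<oplus>\<^sub>T B) k = wC (A \<oplus>\<^sub>T {}) k + wC ({} \<oplus>\<^sub>T B) k" for k
    unfolding wC_def chi_join by (simp add: chi_def add_divide_distrib)
  then have e: "wC (A \<oplus>\<^sub>T B) = (\<lambda>k. wC (A \<oplus>\<^sub>T {}) k + wC ({} \<oplus>\<^sub>T B) k)" by (rule ext)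
  show ?thesis unfolding rC_def e using suminf_add[OF summable_wC summable_wC] by simp
qed

lemma memK: "x \<in> reals_of_degrees S \<longleftrightarrow> tdeg (real_cut x) \<in> S"
  unfolding reals_of_degrees_def real_deg_def by simp

lemma ideal_down: "degree_ideal S \<Longrightarrow> tdeg A \<in> S \<Longrightarrow> B \<le>\<^sub>T A \<Longrightarrow> tdeg B \<in> S"
  unfolding degree_ideal_def by blast
lemma ideal_join: "degree_ideal S \<Longrightarrow> tdeg A \<in> S \<Longrightarrow> tdeg B \<in> S \<Longrightarrow> tdeg (A \<oplus>\<^sub>T B) \<in> S"
  unfolding degree_ideal_def by blast

lemma toK: "degree_ideal S \<Longrightarrow> tdeg B \<in> S \<Longrightarrow> Lc (chi B) x \<Longrightarrow> Uc (chi B) x \<Longrightarrow> x \<in> reals_of_degrees S"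
  unfolding memK using cut_dec ideal_down tle_iff by metis

context
  fixes S assumes id: "degree_ideal S" and sub: "S \<subseteq> turing_degrees"
begin

lemma K_rat: "rq k \<in> reals_of_degrees S"
proof -
  obtain d where "d \<in> S" using id unfolding degree_ideal_def by blast
  then obtain B where "tdeg B \<in> S" using sub unfolding turing_degrees_def by blast
  then show ?thesis using toK[OF id _ Lc_rat Uc_rat] by blast
qed

lemma K_add: "x \<in> reals_of_degrees S \<Longrightarrow> y \<in> reals_of_degrees S \<Longrightarrow> x + y \<in> reals_of_degrees S"
proof -
  assume "x \<in> reals_of_degrees S" "y \<in> reals_of_degrees S"
  then have B: "tdeg (real_cut x \<oplus>\<^sub>T real_cut y) \<in> S" using ideal_join[OF id] memK by blast
  let ?f = "chi (real_cut x \<oplus>\<^sub>T real_cut y)"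
  have "rc ?f (chi (real_cut x))" "rc ?f (chi (real_cut y))" using A_le_join B_le_join tle_iff by blast+
  then have "Lc ?f x" "Uc ?f x" "Lc ?f y" "Uc ?f y" using Lc_trans Uc_trans Lc_self Uc_self by blast+
  then show ?thesis using toK[OF id B Lc_add Uc_add] by blast
qed

lemma K_neg: "x \<in> reals_of_degrees S \<Longrightarrow> - x \<in> reals_of_degrees S"
  using toK[OF id _ Lc_neg[OF Uc_self] Uc_neg[OF Lc_self]] memK by blast

lemma K_mulpos: "x \<in> reals_of_degrees S \<Longrightarrow> y \<in> reals_of_degrees S \<Longrightarrow> 0 < x \<Longrightarrow> 0 < y \<Longrightarrow> x * y \<in> reals_of_degrees S"
proof -
  assume "x \<in> reals_of_degrees S" "y \<in> reals_of_degrees S" and p: "0 < x" "0 < y"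
  then have B: "tdeg (real_cut x \<oplus>\<^sub>T real_cut y) \<in> S" using ideal_join[OF id] memK by blast
  let ?f = "chi (real_cut x \<oplus>\<^sub>T real_cut y)"
  have "rc ?f (chi (real_cut x))" "rc ?f (chi (real_cut y))" using A_le_join B_le_join tle_iff by blast+
  then have "Lc ?f x" "Uc ?f x" "Lc ?f y" "Uc ?f y" using Lc_trans Uc_trans Lc_self Uc_self by blast+
  then show ?thesis using toK[OF id B Lc_mul Uc_mul] p by blast
qed

lemma K_invpos: "x \<in> reals_of_degrees S \<Longrightarrow> 0 < x \<Longrightarrow> inverse x \<in> reals_of_degrees S"
  using toK[OF id _ Lc_inv[OF Uc_self] Uc_inv[OF Lc_self]] memK by blast

lemma K_nat: "real N \<in> reals_of_degrees S"
  using K_rat[of "mkcode N 0 1"] by (simp add: rq_mkcode)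

lemma K_mul: "x \<in> reals_of_degrees S \<Longrightarrow> y \<in> reals_of_degrees S \<Longrightarrow> x * y \<in> reals_of_degrees S"
proof -
  assume x: "x \<in> reals_of_degrees S" and y: "y \<in> reals_of_degrees S"
  obtain N :: nat where N: "\<bar>x\<bar> + \<bar>y\<bar> + 1 < real N" using reals_Archimedean2 by blast
  let ?N = "real N"
  have Np: "0 < ?N" and xp: "0 < x + ?N" and yp: "0 < y + ?N" using N by auto
  have x': "x + ?N \<in> reals_of_degrees S" and y': "y + ?N \<in> reals_of_degrees S" using K_add K_nat x y by blast+
  have a: "(x + ?N) * (y + ?N) \<in> reals_of_degrees S" using K_mulpos x' y' xp yp by blast
  have b: "- (?N * (x + ?N)) \<in> reals_of_degrees S" using K_neg K_mulpos K_nat x' Np xp by blast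
  have c: "- (?N * (y + ?N)) \<in> reals_of_degrees S" using K_neg K_mulpos K_nat y' Np yp by blast
  have d: "?N * ?N \<in> reals_of_degrees S" using K_mulpos K_nat Np by blast
  have "x * y = (x + ?N) * (y + ?N) + - (?N * (x + ?N)) + - (?N * (y + ?N)) + ?N * ?N"
    by (simp add: algebra_simps)
  then show ?thesis using K_add a b c d by metis
qed

lemma K_inv: "x \<in> reals_of_degrees S \<Longrightarrow> x \<noteq> 0 \<Longrightarrow> inverse x \<in> reals_of_degrees S"
proof -
  assume x: "x \<in> reals_of_degrees S" "x \<noteq> 0"
  show ?thesis
  proof (cases "0 < x")
    case True then show ?thesis using K_invpos x by blast
  next
    case False
    then have "0 < - x" using x by simp
    then have "inverse (- x) \<in> reals_of_degrees S" using K_invpos K_neg x by blast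
    then show ?thesis using K_neg by (metis inverse_minus_eq minus_minus)
  qed
qed

lemma subfield_K: "is_subfield (reals_of_degrees S)"
  unfolding is_subfield_def
  using K_rat[of c0] K_rat[of c1] rq_c0 rq_c1 K_add K_mul K_neg K_inv by auto

end

lemma ideal_of_subfield:
  assumes K: "is_subfield (reals_of_degrees S)"
  shows "degree_ideal S"
proof -
  let ?K = "reals_of_degrees S"
  have mem: "x \<in> ?K \<longleftrightarrow> real_deg x \<in> S" for x unfolding reals_of_degrees_def by simp
  have add: "x \<in> ?K \<Longrightarrow> y \<in> ?K \<Longrightarrow> x + y \<in> ?K" for x y using K unfolding is_subfield_def by blast
  have neg: "x \<in> ?K \<Longrightarrow> - x \<in> ?K" for x using K unfolding is_subfield_def by blast
  have A1: "rC (A \<oplus>\<^sub>T {}) \<in> ?K" if "tdeg A \<in> S" for A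
    using that unfolding mem rdeg_rC teq_tdeg[OF teq_join_empty1] .
  have B1: "rC ({} \<oplus>\<^sub>T B) \<in> ?K \<longleftrightarrow> tdeg B \<in> S" for B
    unfolding mem rdeg_rC teq_tdeg[OF teq_join_empty2] ..
  have "S \<noteq> {}" using K mem unfolding is_subfield_def by blast
  moreover have "tdeg (A \<oplus>\<^sub>T B) \<in> S" if "tdeg A \<in> S" "tdeg B \<in> S" for A B
  proof -
    have "rC (A \<oplus>\<^sub>T B) \<in> ?K" using add A1 B1 that rC_join by metis
    then show ?thesis unfolding mem rdeg_rC .
  qed
  moreover have "tdeg B \<in> S" if "tdeg A \<in> S" "B \<le>\<^sub>T A" for A B
  proof -
    have "rC (A \<oplus>\<^sub>T B) \<in> ?K" using that unfolding mem rdeg_rC teq_tdeg[OF teq_join_below[OF that(2)]] by simp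
    then have "rC (A \<oplus>\<^sub>T B) + - rC (A \<oplus>\<^sub>T {}) \<in> ?K" using add neg A1 that(1) by blast
    then have "rC ({} \<oplus>\<^sub>T B) \<in> ?K" using rC_join[of A B] by simp
    then show ?thesis using B1 by blast
  qed
  ultimately show ?thesis unfolding degree_ideal_def by blast
qed

theorem mainTheorem4:
  fixes S :: "nat set set set"
  assumes "S \<subseteq> turing_degrees"
  shows "is_subfield (reals_of_degrees S) \<longleftrightarrow> degree_ideal S"
  using ideal_of_subfield subfield_K assms by blast

end
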